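(* Consider a deterministic two-player discounted game on $\vec{\mathcal G}=([n],E)$, $m=|E|$. Fix $r\in\mathbb R^m$ and $\gamma\in(0,1)$, and let $\tilde r\in\mathbb R^m$, $\varepsilon>0$ satisfy $\|r-\tilde r\|_\infty\le\varepsilon$. Put $\delta=\frac{2\varepsilon}{(1-\gamma)\gamma^n}$. Let $(\sigma,\tau)$ be any pair of policies and $E^{\sigma,\tau}$ the set of edges they use. Define $r^{(1)},r^{(2)}\in\mathbb R^m$ by $r^{(1)}_{ij}=r^{(2)}_{ij}=\tilde r_{ij}$ if $(i,j)\in E^{\sigma,\tau}$, and $r^{(1)}_{ij}=\tilde r_{ij}-\delta$, $r^{(2)}_{ij}=\tilde r_{ij}+\delta$ otherwise. If $(\sigma,\tau)$ is a pair of optimal policies in the discounted games with discount factor $\gamma$ and weights $r^{(1)}$ and $r^{(2)}$, then $(\sigma,\tau)$ is a pair of optimal policies in the discounted game with discount factor $\gamma$ and weights $r$.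
   Context: The graph has no multiple edges, each vertex has an outgoing edge, $[n]=V_{\max}\uplus V_{\min}$, weights $r\in\mathbb R^E$. Policies $\sigma:V_{\max}\to[n]$, $\tau:V_{\min}\to[n]$ with $(i,\sigma(i)),(i,\tau(i))\in E$; $E^{\sigma,\tau}=\{(i,\sigma(i))\}\cup\{(i,\tau(i))\}$. Discounted game with factor $\gamma$: along the play $i_0,i_1,\dots$ Max receives $(1-\gamma)\sum_{t\ge0}\gamma^t r_{i_ti_{t+1}}$ (Max maximizes, Min minimizes). Its value $\lambda^{(\gamma)}\in\mathbb R^n$ is the unique solution of $\lambda^{(\gamma)}_i=\max_{(i,j)\in E}\{(1-\gamma)r_{ij}+\gamma\lambda^{(\gamma)}_j\}$ for $i\in V_{\max}$ and $\lambda^{(\gamma)}_i=\min_{(i,j)\in E}\{(1-\gamma)r_{ij}+\gamma\lambda^{(\gamma)}_j\}$ for $i\in V_{\min}$; a pair $(\sigma,\tau)$ is optimal iff $\sigma(i)$ attains the maximum for every $i\in V_{\max}$ and $\tau(i)$ attains the minimum for every $i\in V_{\min}$ (equivalently, each policy guarantees the value from every initial state against any policy of the opponent). *)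

theory Defs
  imports Complex_Main
begin

text \<open>Game graph: vertices [n] = {1..n}, edge set E, Max vertices Vmax,
  Min vertices [n] - Vmax. Weights are functions on pairs (only values on E matter).\<close>

definition game_graph :: "nat \<Rightarrow> (nat \<times> nat) set \<Rightarrow> nat set \<Rightarrow> bool" where
  "game_graph n E Vmax \<longleftrightarrow> E \<subseteq> {1..n} \<times> {1..n} \<and> Vmax \<subseteq> {1..n}
     \<and> (\<forall>i\<in>{1..n}. \<exists>j. (i, j) \<in> E)"

definition succ_vals :: "(nat \<times> nat) set \<Rightarrow> (nat \<times> nat \<Rightarrow> real) \<Rightarrow> real \<Rightarrow> (nat \<Rightarrow> real) \<Rightarrow> nat \<Rightarrow> real set" where
  "succ_vals E r \<gamma> lam i = {(1 - \<gamma>) * r (i, j) + \<gamma> * lam j | j. (i, j) \<in> E}"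

definition solves_bellman :: "nat \<Rightarrow> (nat \<times> nat) set \<Rightarrow> nat set \<Rightarrow> (nat \<times> nat \<Rightarrow> real) \<Rightarrow> real \<Rightarrow> (nat \<Rightarrow> real) \<Rightarrow> bool" where
  "solves_bellman n E Vmax r \<gamma> lam \<longleftrightarrow>
     (\<forall>i\<in>Vmax. lam i = Max (succ_vals E r \<gamma> lam i)) \<and>
     (\<forall>i\<in>{1..n} - Vmax. lam i = Min (succ_vals E r \<gamma> lam i))"

text \<open>The value of the discounted game: the unique solution of the Bellman equations
  (normalised to 0 outside the vertex set [n]).\<close>
definition disc_value :: "nat \<Rightarrow> (nat \<times> nat) set \<Rightarrow> nat set \<Rightarrow> (nat \<times> nat \<Rightarrow> real) \<Rightarrow> real \<Rightarrow> nat \<Rightarrow> real" where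
  "disc_value n E Vmax r \<gamma> = (THE lam. solves_bellman n E Vmax r \<gamma> lam \<and> (\<forall>i. i \<notin> {1..n} \<longrightarrow> lam i = 0))"

definition is_policy_pair :: "nat \<Rightarrow> (nat \<times> nat) set \<Rightarrow> nat set \<Rightarrow> (nat \<Rightarrow> nat) \<Rightarrow> (nat \<Rightarrow> nat) \<Rightarrow> bool" where
  "is_policy_pair n E Vmax \<sigma> \<tau> \<longleftrightarrow> (\<forall>i\<in>Vmax. (i, \<sigma> i) \<in> E) \<and> (\<forall>i\<in>{1..n} - Vmax. (i, \<tau> i) \<in> E)"

definition policy_edges :: "nat \<Rightarrow> nat set \<Rightarrow> (nat \<Rightarrow> nat) \<Rightarrow> (nat \<Rightarrow> nat) \<Rightarrow> (nat \<times> nat) set" where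
  "policy_edges n Vmax \<sigma> \<tau> = {(i, \<sigma> i) | i. i \<in> Vmax} \<union> {(i, \<tau> i) | i. i \<in> {1..n} - Vmax}"

definition optimal_pair :: "nat \<Rightarrow> (nat \<times> nat) set \<Rightarrow> nat set \<Rightarrow> (nat \<times> nat \<Rightarrow> real) \<Rightarrow> real \<Rightarrow> (nat \<Rightarrow> nat) \<Rightarrow> (nat \<Rightarrow> nat) \<Rightarrow> bool" where
  "optimal_pair n E Vmax r \<gamma> \<sigma> \<tau> \<longleftrightarrow>
     (let lam = disc_value n E Vmax r \<gamma> in
       (\<forall>i\<in>Vmax. (1 - \<gamma>) * r (i, \<sigma> i) + \<gamma> * lam (\<sigma> i) = Max (succ_vals E r \<gamma> lam i)) \<and>
       (\<forall>i\<in>{1..n} - Vmax. (1 - \<gamma>) * r (i, \<tau> i) + \<gamma> * lam (\<tau> i) = Min (succ_vals E r \<gamma> lam i)))"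

end

theory Submission
  imports Defs "HOL-Analysis.Analysis" "HOL-Probability.Discrete_Topology"
begin

lemma sv_image: "succ_vals E r \<gamma> lam i = (\<lambda>j. (1-\<gamma>)*r(i,j)+\<gamma>*lam j) ` {j. (i,j)\<in>E}"
  by (auto simp: succ_vals_def)

lemma succ_fin: "game_graph n E Vmax \<Longrightarrow> finite {j. (i,j)\<in>E}"
  unfolding game_graph_def by (rule finite_subset[of _ "{1..n}"]) auto

lemma succ_ne: "game_graph n E Vmax \<Longrightarrow> i \<in> {1..n} \<Longrightarrow> {j. (i,j)\<in>E} \<noteq> {}"
  unfolding game_graph_def by auto

lemma succ_in: "game_graph n E Vmax \<Longrightarrow> (i,j) \<in> E \<Longrightarrow> j \<in> {1..n} \<and> i \<in> {1..n}"
  unfolding game_graph_def by auto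

lemma sv_fin: "game_graph n E Vmax \<Longrightarrow> finite (succ_vals E r \<gamma> lam i)"
  using succ_fin by (simp add: sv_image)

lemma sv_ne: "game_graph n E Vmax \<Longrightarrow> i \<in> {1..n} \<Longrightarrow> succ_vals E r \<gamma> lam i \<noteq> {}"
  using succ_ne by (simp add: sv_image)

lemma maxmin_diff:
  fixes f g :: "'a \<Rightarrow> real"
  assumes "finite S" "S \<noteq> {}" "\<forall>j\<in>S. \<bar>f j - g j\<bar> \<le> c"
  shows "\<bar>Max (f`S) - Max (g`S)\<bar> \<le> c \<and> \<bar>Min (f`S) - Min (g`S)\<bar> \<le> c"
proof -
  have A: "Max (f`S) \<le> Max (g`S) + c" if "finite S" "S \<noteq> {}" "\<forall>j\<in>S. \<bar>f j - g j\<bar> \<le> c"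
    for f g :: "'a \<Rightarrow> real"
  proof -
    have "Max (f`S) \<in> f`S" using that by simp
    then obtain j where j: "j \<in> S" "Max (f`S) = f j" by auto
    have "g j \<le> Max (g`S)" using that j by simp
    moreover have "\<bar>f j - g j\<bar> \<le> c" using that j by blast
    ultimately show ?thesis using j by linarith
  qed
  have B: "Min (f`S) \<le> Min (g`S) + c" if "finite S" "S \<noteq> {}" "\<forall>j\<in>S. \<bar>f j - g j\<bar> \<le> c"
    for f g :: "'a \<Rightarrow> real"
  proof -
    have "Min (g`S) \<in> g`S" using that by simp
    then obtain j where j: "j \<in> S" "Min (g`S) = g j" by auto
    have "Min (f`S) \<le> f j" using that j by simp
    moreover have "\<bar>f j - g j\<bar> \<le> c" using that j by blast
    ultimately show ?thesis using j by linarith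
  qed
  have s: "\<forall>j\<in>S. \<bar>g j - f j\<bar> \<le> c" using assms(3) by (simp add: abs_minus_commute)
  show ?thesis using A[OF assms] A[OF assms(1,2) s] B[OF assms] B[OF assms(1,2) s] by linarith
qed

lemma contr:
  assumes G: "game_graph n E Vmax" and g: "0 \<le> \<gamma>" and i: "i \<in> {1..n}"
    and d: "\<forall>j\<in>{1..n}. \<bar>lam j - mu j\<bar> \<le> c"
  shows "\<bar>Max (succ_vals E r \<gamma> lam i) - Max (succ_vals E r \<gamma> mu i)\<bar> \<le> \<gamma>*c
       \<and> \<bar>Min (succ_vals E r \<gamma> lam i) - Min (succ_vals E r \<gamma> mu i)\<bar> \<le> \<gamma>*c"
proof -
  have "\<forall>j\<in>{j. (i,j)\<in>E}. \<bar>((1-\<gamma>)*r(i,j)+\<gamma>*lam j) - ((1-\<gamma>)*r(i,j)+\<gamma>*mu j)\<bar> \<le> \<gamma>*c"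
  proof
    fix j assume "j \<in> {j. (i,j)\<in>E}"
    hence "\<bar>lam j - mu j\<bar> \<le> c" using d succ_in[OF G] by auto
    hence "\<gamma>*\<bar>lam j - mu j\<bar> \<le> \<gamma>*c" using g by (simp add: mult_left_mono)
    thus "\<bar>((1-\<gamma>)*r(i,j)+\<gamma>*lam j) - ((1-\<gamma>)*r(i,j)+\<gamma>*mu j)\<bar> \<le> \<gamma>*c"
      using g by (simp add: abs_mult right_diff_distrib[symmetric])
  qed
  from maxmin_diff[OF succ_fin[OF G] succ_ne[OF G i] this] show ?thesis by (simp add: sv_image)
qed

lemma bellman_unique:
  assumes G: "game_graph n E Vmax" and g: "0 \<le> \<gamma>" "\<gamma> < 1"
    and L: "solves_bellman n E Vmax r \<gamma> lam" "\<forall>i. i \<notin> {1..n} \<longrightarrow> lam i = 0"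
    and M: "solves_bellman n E Vmax r \<gamma> mu" "\<forall>i. i \<notin> {1..n} \<longrightarrow> mu i = 0"
  shows "lam = mu"
proof (cases "n = 0")
  case True thus ?thesis using L M by auto
next
  case False
  define D where "D = Max ((\<lambda>i. \<bar>lam i - mu i\<bar>) ` {1..n})"
  have D: "\<forall>j\<in>{1..n}. \<bar>lam j - mu j\<bar> \<le> D" unfolding D_def by simp
  have Vs: "Vmax \<subseteq> {1..n}" using G by (simp add: game_graph_def)
  have step: "\<bar>lam i - mu i\<bar> \<le> \<gamma>*D" if i: "i \<in> {1..n}" for i
  proof (cases "i \<in> Vmax")
    case True
    thus ?thesis using contr[OF G g(1) i D, of r] L(1) M(1) unfolding solves_bellman_def by auto
  next
    case False
    thus ?thesis using contr[OF G g(1) i D, of r] L(1) M(1) i unfolding solves_bellman_def by auto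
  qed
  have "D \<in> (\<lambda>i. \<bar>lam i - mu i\<bar>) ` {1..n}" unfolding D_def using False by simp
  then obtain i0 where "i0 \<in> {1..n}" "D = \<bar>lam i0 - mu i0\<bar>" by auto
  hence "D \<le> \<gamma>*D" "0 \<le> D" using step by auto
  hence "D \<le> 0" using g by (smt (verit) mult_right_less_imp_less mult_cancel_right2)
  hence "\<forall>j\<in>{1..n}. lam j = mu j" using D by force
  thus ?thesis using L(2) M(2) by (metis ext)
qed

definition Top where
  "Top n E Vmax r \<gamma> lam i = (if i \<in> Vmax then Max (succ_vals E r \<gamma> lam i)
      else if i \<in> {1..n} then Min (succ_vals E r \<gamma> lam i) else 0)"

definition Topd where
  "Topd n E Vmax r \<gamma> f k = Top n E Vmax r \<gamma> (\<lambda>i. f (discrete i)) (of_discrete k)"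

lemma Top_bcont: "game_graph n E Vmax \<Longrightarrow> Topd n E Vmax r \<gamma> f \<in> bcontfun"
proof -
  assume G: "game_graph n E Vmax"
  have Vs: "Vmax \<subseteq> {1..n}" using G by (simp add: game_graph_def)
  have "range (Topd n E Vmax r \<gamma> f) \<subseteq> insert 0 (Top n E Vmax r \<gamma> (\<lambda>i. f (discrete i)) ` {1..n})"
    using Vs by (auto simp: Topd_def Top_def)
  hence "finite (range (Topd n E Vmax r \<gamma> f))" by (rule finite_subset) auto
  thus ?thesis unfolding bcontfun_def
    by (simp add: finite_imp_bounded continuous_on_open_invariant open_discrete)
qed

lemma bellman_exists:
  assumes G: "game_graph n E Vmax" and g: "0 \<le> \<gamma>" "\<gamma> < 1"
  shows "\<exists>lam. solves_bellman n E Vmax r \<gamma> lam \<and> (\<forall>i. i \<notin> {1..n} \<longrightarrow> lam i = 0)"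
proof -
  define F :: "(nat discrete \<Rightarrow>\<^sub>C real) \<Rightarrow> (nat discrete \<Rightarrow>\<^sub>C real)" where
    "F f = Bcontfun (Topd n E Vmax r \<gamma> (apply_bcontfun f))" for f
  have FA: "apply_bcontfun (F f) = Topd n E Vmax r \<gamma> (apply_bcontfun f)" for f
    unfolding F_def using Top_bcont[OF G] by (simp add: Bcontfun_inverse)
  have Vs: "Vmax \<subseteq> {1..n}" using G by (simp add: game_graph_def)
  have "\<forall>x y. dist (F x) (F y) \<le> \<gamma> * dist x y"
  proof (intro allI)
    fix x y :: "nat discrete \<Rightarrow>\<^sub>C real"
    have d: "\<forall>j\<in>{1..n}. \<bar>apply_bcontfun x (discrete j) - apply_bcontfun y (discrete j)\<bar> \<le> dist x y"
      using dist_bounded[of x _ y] by (simp add: dist_real_def)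
    show "dist (F x) (F y) \<le> \<gamma> * dist x y"
    proof (rule dist_bound)
      fix k
      show "dist (apply_bcontfun (F x) k) (apply_bcontfun (F y) k) \<le> \<gamma> * dist x y"
      proof (cases "of_discrete k \<in> {1..n}")
        case True
        thus ?thesis using contr[OF G g(1) True d, of r] by (auto simp: FA Topd_def Top_def dist_real_def)
      next
        case False
        thus ?thesis using Vs g by (auto simp: FA Topd_def Top_def)
      qed
    qed
  qed
  from banach_fix_type[OF g this] obtain x where x: "F x = x" by blast
  hence T: "Topd n E Vmax r \<gamma> (apply_bcontfun x) = apply_bcontfun x" using FA by metis
  define lam where "lam = (\<lambda>i. apply_bcontfun x (discrete i))"
  have TL: "Top n E Vmax r \<gamma> lam i = lam i" for i
    using fun_cong[OF T, of "discrete i"] by (simp add: Topd_def lam_def discrete_inverse)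
  show ?thesis
  proof (intro exI conjI)
    show "solves_bellman n E Vmax r \<gamma> lam" unfolding solves_bellman_def
      using TL Vs by (metis Diff_iff Top_def)
    show "\<forall>i. i \<notin> {1..n} \<longrightarrow> lam i = 0"
      using TL Vs by (metis Top_def subsetD)
  qed
qed

lemma dv:
  assumes G: "game_graph n E Vmax" and g: "0 \<le> \<gamma>" "\<gamma> < 1"
  shows "solves_bellman n E Vmax r \<gamma> (disc_value n E Vmax r \<gamma>)
     \<and> (\<forall>i. i \<notin> {1..n} \<longrightarrow> disc_value n E Vmax r \<gamma> i = 0)"
proof -
  obtain lam where l: "solves_bellman n E Vmax r \<gamma> lam \<and> (\<forall>i. i \<notin> {1..n} \<longrightarrow> lam i = 0)"
    using bellman_exists[OF assms] by blast
  show ?thesis unfolding disc_value_def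
    by (rule theI[of _ lam]) (use l bellman_unique[OF assms] in auto)
qed

lemma dv_eq:
  assumes G: "game_graph n E Vmax" and g: "0 \<le> \<gamma>" "\<gamma> < 1"
    and "solves_bellman n E Vmax r \<gamma> lam" "\<forall>i. i \<notin> {1..n} \<longrightarrow> lam i = 0"
  shows "disc_value n E Vmax r \<gamma> = lam"
  using bellman_unique[OF G g _ _ assms(4,5)] dv[OF G g] by blast

lemma polP:
  assumes "Vmax \<subseteq> {1..n}"
  shows "i \<in> Vmax \<Longrightarrow> (i,j) \<in> policy_edges n Vmax \<sigma> \<tau> \<longleftrightarrow> j = \<sigma> i"
    and "i \<in> {1..n} - Vmax \<Longrightarrow> (i,j) \<in> policy_edges n Vmax \<sigma> \<tau> \<longleftrightarrow> j = \<tau> i"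
  by (auto simp: policy_edges_def)

lemma GP:
  assumes G: "game_graph n E Vmax" and p: "is_policy_pair n E Vmax \<sigma> \<tau>"
  shows "game_graph n (policy_edges n Vmax \<sigma> \<tau>) Vmax"
  using assms unfolding game_graph_def is_policy_pair_def policy_edges_def
  by (auto; metis Diff_iff atLeastAtMost_iff)

lemma PsubE:
  assumes p: "is_policy_pair n E Vmax \<sigma> \<tau>"
  shows "policy_edges n Vmax \<sigma> \<tau> \<subseteq> E"
  using assms unfolding is_policy_pair_def policy_edges_def by auto

lemma sv_P:
  assumes "Vmax \<subseteq> {1..n}"
  shows "i \<in> Vmax \<Longrightarrow> succ_vals (policy_edges n Vmax \<sigma> \<tau>) w \<gamma> lam i = {(1-\<gamma>)*w(i,\<sigma> i)+\<gamma>*lam(\<sigma> i)}"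
    and "i \<in> {1..n} - Vmax \<Longrightarrow> succ_vals (policy_edges n Vmax \<sigma> \<tau>) w \<gamma> lam i = {(1-\<gamma>)*w(i,\<tau> i)+\<gamma>*lam(\<tau> i)}"
  using polP[OF assms] by (auto simp: succ_vals_def)

lemma bell_P:
  assumes "Vmax \<subseteq> {1..n}"
  shows "solves_bellman n (policy_edges n Vmax \<sigma> \<tau>) Vmax w \<gamma> lam \<longleftrightarrow>
    (\<forall>i\<in>Vmax. lam i = (1-\<gamma>)*w(i,\<sigma> i)+\<gamma>*lam(\<sigma> i)) \<and>
    (\<forall>i\<in>{1..n} - Vmax. lam i = (1-\<gamma>)*w(i,\<tau> i)+\<gamma>*lam(\<tau> i))"
  unfolding solves_bellman_def using sv_P[OF assms] by simp

lemma opt_bell: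
  assumes G: "game_graph n E Vmax" and g: "0 \<le> \<gamma>" "\<gamma> < 1"
    and p: "is_policy_pair n E Vmax \<sigma> \<tau>"
    and o: "optimal_pair n E Vmax w \<gamma> \<sigma> \<tau>"
    and ag: "\<forall>e\<in>policy_edges n Vmax \<sigma> \<tau>. w e = rt e"
  shows "solves_bellman n (policy_edges n Vmax \<sigma> \<tau>) Vmax rt \<gamma> (disc_value n E Vmax w \<gamma>)"
proof -
  have Vs: "Vmax \<subseteq> {1..n}" using G by (simp add: game_graph_def)
  have B: "solves_bellman n E Vmax w \<gamma> (disc_value n E Vmax w \<gamma>)" using dv[OF G g] by blast
  show ?thesis unfolding bell_P[OF Vs]
  proof (intro conjI ballI)
    fix i assume i: "i \<in> Vmax"
    have "(i, \<sigma> i) \<in> policy_edges n Vmax \<sigma> \<tau>" using polP(1)[OF Vs i] by simp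
    thus "disc_value n E Vmax w \<gamma> i = (1-\<gamma>)*rt(i,\<sigma> i)+\<gamma>*disc_value n E Vmax w \<gamma> (\<sigma> i)"
      using B o i ag unfolding solves_bellman_def optimal_pair_def Let_def by auto
  next
    fix i assume i: "i \<in> {1..n} - Vmax"
    have "(i, \<tau> i) \<in> policy_edges n Vmax \<sigma> \<tau>" using polP(2)[OF Vs i] by simp
    moreover have "disc_value n E Vmax w \<gamma> i = Min (succ_vals E w \<gamma> (disc_value n E Vmax w \<gamma>) i)"
      using B i unfolding solves_bellman_def by blast
    moreover have "(1-\<gamma>)*w(i,\<tau> i)+\<gamma>*disc_value n E Vmax w \<gamma> (\<tau> i) = Min (succ_vals E w \<gamma> (disc_value n E Vmax w \<gamma>) i)"
      using o i unfolding optimal_pair_def Let_def by blast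
    ultimately show "disc_value n E Vmax w \<gamma> i = (1-\<gamma>)*rt(i,\<tau> i)+\<gamma>*disc_value n E Vmax w \<gamma> (\<tau> i)"
      using ag by auto
  qed
qed

theorem mainTheorem19:
  fixes n :: nat and E :: "(nat \<times> nat) set" and Vmax :: "nat set"
    and r rt :: "nat \<times> nat \<Rightarrow> real" and \<gamma> \<epsilon> :: real and \<sigma> \<tau> :: "nat \<Rightarrow> nat"
  assumes "game_graph n E Vmax"
    and "0 < \<gamma>" and "\<gamma> < 1"
    and "0 < \<epsilon>" and "\<forall>e\<in>E. \<bar>r e - rt e\<bar> \<le> \<epsilon>"
    and "is_policy_pair n E Vmax \<sigma> \<tau>"
    and "optimal_pair n E Vmax
           (\<lambda>e. if e \<in> policy_edges n Vmax \<sigma> \<tau> then rt e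
                 else rt e - 2 * \<epsilon> / ((1 - \<gamma>) * \<gamma> ^ n)) \<gamma> \<sigma> \<tau>"
    and "optimal_pair n E Vmax
           (\<lambda>e. if e \<in> policy_edges n Vmax \<sigma> \<tau> then rt e
                 else rt e + 2 * \<epsilon> / ((1 - \<gamma>) * \<gamma> ^ n)) \<gamma> \<sigma> \<tau>"
  shows "optimal_pair n E Vmax r \<gamma> \<sigma> \<tau>"
proof -
  note G = assms(1) and p = assms(6)
  have g: "0 \<le> \<gamma>" "\<gamma> < 1" using assms(2,3) by auto
  have Vs: "Vmax \<subseteq> {1..n}" using G by (simp add: game_graph_def)
  define P where "P = policy_edges n Vmax \<sigma> \<tau>"
  define \<delta> where "\<delta> = 2 * \<epsilon> / ((1 - \<gamma>) * \<gamma> ^ n)"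
  define r1 where "r1 = (\<lambda>e. if e \<in> P then rt e else rt e - \<delta>)"
  define r2 where "r2 = (\<lambda>e. if e \<in> P then rt e else rt e + \<delta>)"
  have o1: "optimal_pair n E Vmax r1 \<gamma> \<sigma> \<tau>" using assms(7) unfolding r1_def P_def \<delta>_def .
  have o2: "optimal_pair n E Vmax r2 \<gamma> \<sigma> \<tau>" using assms(8) unfolding r2_def P_def \<delta>_def .
  have GP': "game_graph n P Vmax" unfolding P_def using GP[OF G p] .
  have PE: "P \<subseteq> E" unfolding P_def using PsubE[OF p] .
  define lv where "lv = disc_value n E Vmax r1 \<gamma>"
  have b1: "solves_bellman n P Vmax rt \<gamma> (disc_value n E Vmax r1 \<gamma>)"
    unfolding P_def by (rule opt_bell[OF G g p o1]) (simp add: r1_def P_def)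
  have b2: "solves_bellman n P Vmax rt \<gamma> (disc_value n E Vmax r2 \<gamma>)"
    unfolding P_def by (rule opt_bell[OF G g p o2]) (simp add: r2_def P_def)
  have v12: "disc_value n E Vmax r2 \<gamma> = lv"
    using bellman_unique[OF GP' g b2 _ b1] dv[OF G g] unfolding lv_def by blast
  have vB1: "solves_bellman n E Vmax r1 \<gamma> lv" using dv[OF G g] unfolding lv_def by blast
  have vB2: "solves_bellman n E Vmax r2 \<gamma> lv" using dv[OF G g] v12 by metis
  define \<pi> where "\<pi> i = (if i \<in> Vmax then \<sigma> i else \<tau> i)" for i
  have piP: "(i, \<pi> i) \<in> P" if "i \<in> {1..n}" for i
    using polP[OF Vs] that unfolding P_def \<pi>_def by auto
  have piE: "(i, \<pi> i) \<in> E" "\<pi> i \<in> {1..n}" if "i \<in> {1..n}" for i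
    using piP[OF that] PE succ_in[OF G] by auto
  have vP: "lv i = (1-\<gamma>)*rt(i,\<pi> i)+\<gamma>*lv(\<pi> i)" if "i \<in> {1..n}" for i
    using b1 that unfolding bell_P[OF Vs] P_def lv_def \<pi>_def by auto
  define lw where "lw = disc_value n P Vmax r \<gamma>"
  have lwB: "solves_bellman n P Vmax r \<gamma> lw" and lw0: "\<forall>i. i \<notin> {1..n} \<longrightarrow> lw i = 0"
    using dv[OF GP' g] unfolding lw_def by auto
  have lwP: "lw i = (1-\<gamma>)*r(i,\<pi> i)+\<gamma>*lw(\<pi> i)" if "i \<in> {1..n}" for i
    using lwB that unfolding bell_P[OF Vs] P_def \<pi>_def by auto
  have close: "\<forall>i\<in>{1..n}. \<bar>lw i - lv i\<bar> \<le> \<epsilon>"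
  proof (cases "n = 0")
    case True thus ?thesis by simp
  next
    case False
    define D where "D = Max ((\<lambda>i. \<bar>lw i - lv i\<bar>) ` {1..n})"
    have D: "\<forall>j\<in>{1..n}. \<bar>lw j - lv j\<bar> \<le> D" unfolding D_def by simp
    have step: "\<bar>lw i - lv i\<bar> \<le> (1-\<gamma>)*\<epsilon> + \<gamma>*D" if i: "i \<in> {1..n}" for i
    proof -
      have e1: "\<bar>r(i,\<pi> i) - rt(i,\<pi> i)\<bar> \<le> \<epsilon>" using assms(5) piE(1)[OF i] by blast
      have e2: "\<bar>lw (\<pi> i) - lv (\<pi> i)\<bar> \<le> D" using D piE(2)[OF i] by blast
      have "lw i - lv i = (1-\<gamma>)*(r(i,\<pi> i) - rt(i,\<pi> i)) + \<gamma>*(lw (\<pi> i) - lv (\<pi> i))"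
        using vP[OF i] lwP[OF i] by (simp add: algebra_simps)
      also have "\<bar>\<dots>\<bar> \<le> (1-\<gamma>)*\<bar>r(i,\<pi> i) - rt(i,\<pi> i)\<bar> + \<gamma>*\<bar>lw (\<pi> i) - lv (\<pi> i)\<bar>"
        using g by (simp add: abs_mult abs_triangle_ineq[THEN order_trans])
      also have "\<dots> \<le> (1-\<gamma>)*\<epsilon> + \<gamma>*D"
        using g e1 e2 by (intro add_mono mult_left_mono) auto
      finally show ?thesis .
    qed
    have "D \<in> (\<lambda>i. \<bar>lw i - lv i\<bar>) ` {1..n}" unfolding D_def using False by simp
    then obtain i0 where "i0 \<in> {1..n}" "D = \<bar>lw i0 - lv i0\<bar>" by auto
    hence "D \<le> (1-\<gamma>)*\<epsilon> + \<gamma>*D" using step by auto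
    hence "(1-\<gamma>)*D \<le> (1-\<gamma>)*\<epsilon>" by (simp add: algebra_simps)
    hence "D \<le> \<epsilon>" using g by simp
    thus ?thesis using D by force
  qed
  have gn: "0 < \<gamma>^n" "\<gamma>^n \<le> 1" using assms(2,3) by (auto simp: power_le_one)
  have slackd: "(1-\<gamma>)*\<delta> \<ge> 2*\<epsilon>"
  proof -
    have h1: "1-\<gamma> \<noteq> 0" "\<gamma>^n \<noteq> 0" using g(2) apply simp using gn(1) by linarith
    have "(1-\<gamma>)*\<delta> = 2*\<epsilon>/\<gamma>^n" unfolding \<delta>_def using h1 by (simp add: field_simps)
    also have "\<dots> \<ge> 2*\<epsilon>" using gn assms(4) by (simp add: field_simps)
    finally show ?thesis .
  qed
  have elem: "(1-\<gamma>)*r(i,j)+\<gamma>*lw j \<le> (1-\<gamma>)*rt(i,j)+\<gamma>*lv j + \<epsilon>" if "(i,j) \<in> E" for i j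
  proof -
    have e1: "r(i,j) \<le> rt(i,j) + \<epsilon>" using assms(5) that by fastforce
    have e2: "lw j \<le> lv j + \<epsilon>" using close succ_in[OF G that] by fastforce
    have "(1-\<gamma>)*r(i,j) \<le> (1-\<gamma>)*(rt(i,j) + \<epsilon>)" using e1 g by (intro mult_left_mono) auto
    moreover have "\<gamma>*lw j \<le> \<gamma>*(lv j + \<epsilon>)" using e2 g by (intro mult_left_mono) auto
    ultimately show ?thesis by (simp add: algebra_simps)
  qed
  have MX: "Max (succ_vals E r \<gamma> lw i) = lw i \<and> lw i = (1-\<gamma>)*r(i,\<sigma> i)+\<gamma>*lw(\<sigma> i)"
    if i: "i \<in> Vmax" for i
  proof -
    have iN: "i \<in> {1..n}" using i Vs by auto
    have eq: "lw i = (1-\<gamma>)*r(i,\<sigma> i)+\<gamma>*lw(\<sigma> i)" using lwP[OF iN] i by (simp add: \<pi>_def)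
    have "Max (succ_vals E r \<gamma> lw i) = lw i"
    proof (rule Max_eqI)
      show "finite (succ_vals E r \<gamma> lw i)" by (rule sv_fin[OF G])
      show "lw i \<in> succ_vals E r \<gamma> lw i" using eq piE(1)[OF iN] i
        unfolding succ_vals_def \<pi>_def by auto
      fix y assume "y \<in> succ_vals E r \<gamma> lw i"
      then obtain j where j: "(i,j) \<in> E" "y = (1-\<gamma>)*r(i,j)+\<gamma>*lw j" unfolding succ_vals_def by auto
      show "y \<le> lw i"
      proof (cases "j = \<sigma> i")
        case True thus ?thesis using j eq by simp
      next
        case False
        hence nP: "(i,j) \<notin> P" using polP(1)[OF Vs i] unfolding P_def by simp
        have "(1-\<gamma>)*r2(i,j)+\<gamma>*lv j \<in> succ_vals E r2 \<gamma> lv i" using j(1) unfolding succ_vals_def by auto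
        hence "(1-\<gamma>)*r2(i,j)+\<gamma>*lv j \<le> lv i" using vB2 i sv_fin[OF G] unfolding solves_bellman_def by auto
        hence "(1-\<gamma>)*rt(i,j)+\<gamma>*lv j + (1-\<gamma>)*\<delta> \<le> lv i" using nP by (simp add: r2_def algebra_simps)
        moreover have "lv i \<le> lw i + \<epsilon>" using close iN by fastforce
        ultimately show ?thesis using elem[OF j(1)] j(2) slackd by linarith
      qed
    qed
    thus ?thesis using eq by simp
  qed
  have MN: "Min (succ_vals E r \<gamma> lw i) = lw i \<and> lw i = (1-\<gamma>)*r(i,\<tau> i)+\<gamma>*lw(\<tau> i)"
    if i: "i \<in> {1..n} - Vmax" for i
  proof -
    have iN: "i \<in> {1..n}" using i by auto
    have eq: "lw i = (1-\<gamma>)*r(i,\<tau> i)+\<gamma>*lw(\<tau> i)" using lwP[OF iN] i by (simp add: \<pi>_def)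
    have elem2: "(1-\<gamma>)*r(i,j)+\<gamma>*lw j \<ge> (1-\<gamma>)*rt(i,j)+\<gamma>*lv j - \<epsilon>" if "(i,j) \<in> E" for j
    proof -
      have e1: "r(i,j) \<ge> rt(i,j) - \<epsilon>" using assms(5) that by fastforce
      have e2: "lw j \<ge> lv j - \<epsilon>" using close succ_in[OF G that] by fastforce
      have "(1-\<gamma>)*r(i,j) \<ge> (1-\<gamma>)*(rt(i,j) - \<epsilon>)" using e1 g by (intro mult_left_mono) auto
      moreover have "\<gamma>*lw j \<ge> \<gamma>*(lv j - \<epsilon>)" using e2 g by (intro mult_left_mono) auto
      ultimately show ?thesis by (simp add: algebra_simps)
    qed
    have "Min (succ_vals E r \<gamma> lw i) = lw i"
    proof (rule Min_eqI)
      show "finite (succ_vals E r \<gamma> lw i)" by (rule sv_fin[OF G])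
      show "lw i \<in> succ_vals E r \<gamma> lw i" using eq piE(1)[OF iN] i
        unfolding succ_vals_def \<pi>_def by auto
      fix y assume "y \<in> succ_vals E r \<gamma> lw i"
      then obtain j where j: "(i,j) \<in> E" "y = (1-\<gamma>)*r(i,j)+\<gamma>*lw j" unfolding succ_vals_def by auto
      show "lw i \<le> y"
      proof (cases "j = \<tau> i")
        case True thus ?thesis using j eq by simp
      next
        case False
        hence nP: "(i,j) \<notin> P" using polP(2)[OF Vs i] unfolding P_def by simp
        have "(1-\<gamma>)*r1(i,j)+\<gamma>*lv j \<in> succ_vals E r1 \<gamma> lv i" using j(1) unfolding succ_vals_def by auto
        hence "(1-\<gamma>)*r1(i,j)+\<gamma>*lv j \<ge> lv i" using vB1 i sv_fin[OF G] unfolding solves_bellman_def by auto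
        hence "(1-\<gamma>)*rt(i,j)+\<gamma>*lv j - (1-\<gamma>)*\<delta> \<ge> lv i" using nP by (simp add: r1_def algebra_simps)
        moreover have "lv i \<ge> lw i - \<epsilon>" using close iN by fastforce
        ultimately show ?thesis using elem2[OF j(1)] j(2) slackd by linarith
      qed
    qed
    thus ?thesis using eq by simp
  qed
  have "solves_bellman n E Vmax r \<gamma> lw" unfolding solves_bellman_def using MX MN by auto
  hence dvr: "disc_value n E Vmax r \<gamma> = lw" using dv_eq[OF G g _ lw0] by blast
  show ?thesis unfolding optimal_pair_def Let_def dvr using MX MN by auto
qed

end
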